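(* Let $U\in U(2^n)$ be an $n$-qubit unitary and $d=2^n$. Run the Twin-$U$ circuit with inputs $\vec i,\vec j\in\{0,1\}^n$. Then the probability of obtaining outputs $\vec k$ on register $\mathcal{A}$ and $\vec\ell$ on register $\mathcal{B}$ is $$P(\vec K=(\vec k,\vec\ell)\mid \vec J=(\vec i,\vec j)) = \frac{1}{d^2}\left|\mathrm{Tr}\!\left[U P^{\vec i,\vec j} U^T P^{\vec k,\vec\ell}\right]\right|^2,$$ where $U^T$ is the transpose in the computational basis.
   Context: Labeling of Paulis: $P^{00}=I$, $P^{01}=X$, $P^{10}=Z$, $P^{11}=Y$ (standard Pauli matrices), and $P^{\vec a,\vec b}=P^{a_1b_1}\otimes\cdots\otimes P^{a_nb_n}$. Twin-$U$ circuit: two registers $\mathcal{A},\mathcal{B}$ of $n$ qubits each are prepared in $|\vec i\rangle_{\mathcal{A}}|\vec j\rangle_{\mathcal{B}}$; apply $H^{\otimes n}$ to $\mathcal{A}$; apply CNOTs from qubit $r$ of $\mathcal{A}$ (control) to qubit $r$ of $\mathcal{B}$ (target), $r=1,\dots,n$; apply $U$ to $\mathcal{A}$ and $U$ to $\mathcal{B}$; apply the same transversal CNOTs again; apply $H^{\otimes n}$ to $\mathcal{A}$; measure both registers in the computational basis, yielding $\vec k$ on $\mathcal{A}$ and $\vec \ell$ on $\mathcal{B}$. *)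

theory Defs
  imports Complex_Main "Jordan_Normal_Form.Matrix"
begin

text \<open>An n-bit string is encoded as a natural number x < 2^n; the
r-th qubit (r = 0,...,n-1) of the string corresponds to bit r of x (bit x r).\<close>

definition adj_mat :: "complex mat \<Rightarrow> complex mat" where
  "adj_mat U = mat (dim_col U) (dim_row U) (\<lambda>(i,j). cnj (U $$ (j,i)))"

definition unitary_mat :: "nat \<Rightarrow> complex mat \<Rightarrow> bool" where
  "unitary_mat d U \<longleftrightarrow> U \<in> carrier_mat d d \<and> U * adj_mat U = 1\<^sub>m d \<and> adj_mat U * U = 1\<^sub>m d"

definition mat_trace :: "complex mat \<Rightarrow> complex" where
  "mat_trace A = (\<Sum>i<dim_row A. A $$ (i,i))"

text \<open>Single-qubit Paulis: P^{00}=I, P^{01}=X, P^{10}=Z, P^{11}=Y; entries indexed by bits.\<close>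
definition pauli1 :: "bool \<Rightarrow> bool \<Rightarrow> bool \<Rightarrow> bool \<Rightarrow> complex" where
  "pauli1 a b x y =
     (if \<not> a \<and> \<not> b then (if x = y then 1 else 0)
      else if \<not> a \<and> b then (if x \<noteq> y then 1 else 0)
      else if a \<and> \<not> b then (if x = y then (if x then -1 else 1) else 0)
      else (if x = y then 0 else if x then \<i> else - \<i>))"

definition pauli :: "nat \<Rightarrow> nat \<Rightarrow> nat \<Rightarrow> complex mat" where
  "pauli n a b = mat (2^n) (2^n)
     (\<lambda>(x,y). \<Prod>r<n. pauli1 (bit a r) (bit b r) (bit x r) (bit y r))"

definition hadamard1 :: "bool \<Rightarrow> bool \<Rightarrow> complex" where
  "hadamard1 x y = (if x \<and> y then -1 else 1) / complex_of_real (sqrt 2)"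

definition hadamard :: "nat \<Rightarrow> complex mat" where
  "hadamard n = mat (2^n) (2^n) (\<lambda>(x,y). \<Prod>r<n. hadamard1 (bit x r) (bit y r))"

text \<open>Kronecker product; register A is the more significant factor: basis index a*dB + b.\<close>
definition kron :: "complex mat \<Rightarrow> complex mat \<Rightarrow> complex mat" where
  "kron A B = mat (dim_row A * dim_row B) (dim_col A * dim_col B)
     (\<lambda>(i,j). A $$ (i div dim_row B, j div dim_col B) * B $$ (i mod dim_row B, j mod dim_col B))"

text \<open>Transversal CNOTs: qubit r of A controls qubit r of B, for all r < n.
  On basis states: |x>_A |y>_B  \<mapsto> |x>_A |y XOR x>_B.\<close>
definition transversal_cnot :: "nat \<Rightarrow> complex mat" where
  "transversal_cnot n = mat (2^n * 2^n) (2^n * 2^n)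
     (\<lambda>(p,q). if p div 2^n = q div 2^n \<and> p mod 2^n = xor (q mod 2^n) (q div 2^n) then 1 else 0)"

definition twinU_circuit :: "nat \<Rightarrow> complex mat \<Rightarrow> complex mat" where
  "twinU_circuit n U =
     kron (hadamard n) (1\<^sub>m (2^n)) * transversal_cnot n * kron U U *
     transversal_cnot n * kron (hadamard n) (1\<^sub>m (2^n))"

definition twinU_prob :: "nat \<Rightarrow> complex mat \<Rightarrow> nat \<Rightarrow> nat \<Rightarrow> nat \<Rightarrow> nat \<Rightarrow> real" where
  "twinU_prob n U i j k l =
     (cmod ((twinU_circuit n U *\<^sub>v unit_vec (2^n * 2^n) (i * 2^n + j)) $ (k * 2^n + l)))\<^sup>2"

end

theory Submission imports Defs begin

lemma xor_lt: "(a::nat) < 2^n \<Longrightarrow> b < 2^n \<Longrightarrow> xor a b < 2^n"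
proof -
  assume "a < 2^n" "b < 2^n"
  hence "take_bit n (xor a b) = xor a b"
    by (simp add: take_bit_xor take_bit_nat_eq_self)
  thus ?thesis by (metis take_bit_nat_less_exp)
qed

lemma xor_swap: "(y::nat) = xor t l \<longleftrightarrow> t = xor y l"
  by (auto simp: bit_eq_iff bit_xor_iff)

lemma bit_lt: "(x::nat) < 2^n \<Longrightarrow> bit x r \<Longrightarrow> r < n"
  by (metis bit_take_bit_iff take_bit_nat_eq_self)

lemma bits_eq: "(x::nat) < 2^n \<Longrightarrow> y < 2^n \<Longrightarrow> x = y \<longleftrightarrow> (\<forall>r<n. bit x r = bit y r)"
  by (metis bit_eq_iff bit_lt)

lemma sum2: "(\<Sum>q<d*d. f q) = (\<Sum>a<d. \<Sum>b<d. f (a*d+b::nat))"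
proof -
  have "(\<Sum>q<m*d. f q) = (\<Sum>a<m. \<Sum>b<d. f (a*d+b::nat))" for m
  proof (induction m)
    case 0 then show ?case by simp
  next
    case (Suc m)
    have "(\<Sum>q<Suc m*d. f q) = (\<Sum>q<m*d. f q) + (\<Sum>q\<in>{m*d..<m*d+d}. f q)"
      by (metis add.commute le_add2 lessThan_atLeast0 mult_Suc sum.atLeastLessThan_concat zero_le)
    also have "(\<Sum>q\<in>{m*d..<m*d+d}. f q) = (\<Sum>b<d. f (b+m*d))"
      using sum.shift_bounds_nat_ivl[of f 0 "m*d" d] by (simp add: lessThan_atLeast0 add.commute[of "m*d" d])
    finally show ?case using Suc by (simp add: ac_simps)
  qed
  thus ?thesis .
qed

lemma idx_lt: "(a::nat) < d \<Longrightarrow> b < d \<Longrightarrow> a*d+b < d*d"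
proof -
  assume "a < d" "b < d"
  hence "a*d+b < (a+1)*d" by simp
  also have "... \<le> d*d" using \<open>a<d\<close> by (intro mult_right_mono) auto
  finally show ?thesis .
qed

lemma idx_div: "(b::nat) < d \<Longrightarrow> (a*d+b) div d = a"  by simp
lemma idx_mod: "(b::nat) < d \<Longrightarrow> (a*d+b) mod d = b"  by simp
lemma idx_inj: "(b::nat) < d \<Longrightarrow> b' < d \<Longrightarrow> a*d+b = a'*d+b' \<longleftrightarrow> a = a' \<and> b = b'"
  by (metis idx_div idx_mod)

lemma prod_if0: "(\<Prod>r<(n::nat). if P r then (c r::complex) else 0) = (if \<forall>r<n. P r then \<Prod>r<n. c r else 0)"
proof (cases "\<forall>r<n. P r")
  case True then show ?thesis by (auto intro!: prod.cong)
next
  case False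
  then obtain r where "r < n" "\<not> P r" by auto
  hence "(\<Prod>r<n. if P r then (c r::complex) else 0) = 0"
    by (intro prod_zero) auto
  with False show ?thesis by simp
qed

definition sg :: "nat \<Rightarrow> nat \<Rightarrow> nat \<Rightarrow> complex" where
  "sg n x y = (\<Prod>r<n. if bit x r \<and> bit y r then -1 else 1)"

definition ph1 :: "bool \<Rightarrow> bool \<Rightarrow> bool \<Rightarrow> complex" where
  "ph1 a b x = (if a \<and> b then (if x then \<i> else -\<i>) else if a then (if x then -1 else 1) else 1)"

definition c1 :: "bool \<Rightarrow> bool \<Rightarrow> complex" where
  "c1 a b = (if a \<and> b then -\<i> else 1)"

lemma pauli1_ph: "pauli1 a b x y = (if y = (x \<noteq> b) then ph1 a b x else 0)"
  by (cases a; cases b; cases x; cases y; simp add: pauli1_def ph1_def)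

lemma ph1_c: "ph1 a b x = c1 a b * (if a \<and> x then -1 else 1)"
  by (cases a; cases b; cases x; simp add: c1_def ph1_def)

lemma ph1_c2: "ph1 a b (y \<noteq> b) = (c1 a b * (if a \<and> b then -1 else 1)) * (if a \<and> y then -1 else 1)"
  by (cases a; cases b; cases y; simp add: c1_def ph1_def)

lemma pauli_entry:
  assumes "x < 2^n" "y < 2^n" "b < 2^n"
  shows "pauli n a b $$ (x,y) = (if y = xor x b then \<Prod>r<n. ph1 (bit a r) (bit b r) (bit x r) else 0)"
proof -
  have e: "y = xor x b \<longleftrightarrow> (\<forall>r<n. bit y r = (bit x r \<noteq> bit b r))"
    using bits_eq[OF assms(2) xor_lt[OF assms(1,3)]] by (simp add: bit_xor_iff)
  show ?thesis using assms unfolding pauli_def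
    by (simp add: pauli1_ph prod_if0 e)
qed

lemma ph_prod1: "(\<Prod>r<n. ph1 (bit a r) (bit b r) (bit x r)) = (\<Prod>r<n. c1 (bit a r) (bit b r)) * sg n a x"
  unfolding sg_def ph1_c by (simp add: prod.distrib)

lemma ph_prod2: "(\<Prod>r<n. ph1 (bit a r) (bit b r) (bit (xor y b) r)) =
   (\<Prod>r<n. c1 (bit a r) (bit b r) * (if bit a r \<and> bit b r then -1 else 1)) * sg n a y"
  unfolding sg_def bit_xor_iff ph1_c2 by (simp add: prod.distrib)

lemma norm_c: "cmod (\<Prod>r<n. c1 (bit a r) (bit b r)) = 1"
  unfolding prod_norm[symmetric] by (rule prod.neutral) (auto simp: c1_def)

lemma norm_c2: "cmod (\<Prod>r<n. c1 (bit a r) (bit b r) * (if bit a r \<and> bit b r then -1 else 1)) = 1"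
  unfolding prod_norm[symmetric] by (rule prod.neutral) (auto simp: c1_def norm_mult)

lemma had_entry: "x < 2^n \<Longrightarrow> y < 2^n \<Longrightarrow> hadamard n $$ (x,y) = sg n x y / (complex_of_real (sqrt 2))^n"
  unfolding hadamard_def hadamard1_def sg_def
  by (simp add: prod_dividef)


lemma sum_if_out: "(\<Sum>b\<in>A. if P then f b else 0) = (if P then (\<Sum>b\<in>A. f b) else (0::'a::comm_monoid_add))"
  by auto

lemma kron_vec:
  assumes A: "A \<in> carrier_mat d d" and B: "B \<in> carrier_mat d d" and w: "dim_vec w = d*d"
    and ab: "a < d" "b < d"
  shows "(kron A B *\<^sub>v w) $ (a*d+b) = (\<Sum>a'<d. \<Sum>b'<d. A$$(a,a') * B$$(b,b') * w$(a'*d+b'))"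
proof -
  have dr: "dim_row (kron A B) = d*d" "dim_col (kron A B) = d*d" using A B by (auto simp: kron_def)
  have lt: "a*d+b < d*d" using idx_lt ab by blast
  have "(kron A B *\<^sub>v w) $ (a*d+b) = (\<Sum>q<d*d. kron A B $$ (a*d+b, q) * w $ q)"
    using lt dr w by (simp add: scalar_prod_def lessThan_atLeast0)
  also have "... = (\<Sum>a'<d. \<Sum>b'<d. kron A B $$ (a*d+b, a'*d+b') * w $ (a'*d+b'))"
    by (rule sum2)
  also have "... = (\<Sum>a'<d. \<Sum>b'<d. A$$(a,a') * B$$(b,b') * w$(a'*d+b'))"
    using A B ab idx_lt by (intro sum.cong refl) (simp add: kron_def)
  finally show ?thesis .
qed

lemma cnot_vec:
  assumes w: "dim_vec w = 2^n*2^n" and ab: "a < 2^n" "b < 2^n"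
  shows "(transversal_cnot n *\<^sub>v w) $ (a*2^n+b) = w $ (a*2^n + xor b a)"
proof -
  define d :: nat where "d = 2^n"
  have lt: "a*d+b < d*d" using idx_lt ab d_def by blast
  have "(transversal_cnot n *\<^sub>v w) $ (a*d+b) = (\<Sum>q<d*d. transversal_cnot n $$ (a*d+b, q) * w $ q)"
    using lt w by (simp add: scalar_prod_def lessThan_atLeast0 transversal_cnot_def d_def)
  also have "... = (\<Sum>a'<d. \<Sum>b'<d. transversal_cnot n $$ (a*d+b, a'*d+b') * w $ (a'*d+b'))"
    by (rule sum2)
  also have "... = (\<Sum>a'<d. \<Sum>b'<d. (if a' = a then (if b' = xor b a then w $ (a*d + xor b a) else 0) else 0))"
    using ab idx_lt unfolding d_def
    by (intro sum.cong refl) (auto simp: transversal_cnot_def xor_swap)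
  also have "... = w $ (a*d + xor b a)"
    using ab xor_lt[OF ab(2,1)] unfolding d_def by (simp add: sum_if_out)
  finally show ?thesis by (simp add: d_def)
qed

lemma xor_swap2: "xor (b::nat) a = j \<longleftrightarrow> b = xor j a"
  by (auto simp: bit_eq_iff bit_xor_iff)

lemma sg_sym: "sg n x y = sg n y x"
  unfolding sg_def by (simp add: conj_commute)

lemma sqrt2_pow: "cmod ((complex_of_real (sqrt 2))^n) ^ 2 = 2^n"
  by (simp add: norm_power flip: real_sqrt_power)

theorem lemma4:
  fixes n i j k l :: nat and U :: "complex mat"
  assumes "unitary_mat (2^n) U"
    and "i < 2^n" and "j < 2^n" and "k < 2^n" and "l < 2^n"
  shows "twinU_prob n U i j k l =
    1 / (real (2^n))\<^sup>2 * (cmod (mat_trace (U * pauli n i j * transpose_mat U * pauli n k l)))\<^sup>2"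
proof -
  define d :: nat where "d = 2^n"
  define N where "N = d*d"
  have ij: "i < d" "j < d" "k < d" "l < d" using assms d_def by auto
  have cU: "U \<in> carrier_mat d d" using assms(1) by (simp add: unitary_mat_def d_def)
  have cH: "hadamard n \<in> carrier_mat d d" unfolding hadamard_def d_def by (rule mat_carrier)
  define Hk where "Hk = kron (hadamard n) (1\<^sub>m d)"
  define K where "K = kron U U"
  define C where "C = transversal_cnot n"
  have cHk: "Hk \<in> carrier_mat N N" using cH unfolding Hk_def kron_def N_def by (intro carrier_matI) auto
  have cK: "K \<in> carrier_mat N N" using cU unfolding K_def kron_def N_def by (intro carrier_matI) auto
  have cC: "C \<in> carrier_mat N N" unfolding C_def transversal_cnot_def N_def d_def by (rule mat_carrier)
  define v0 :: "complex vec" where "v0 = unit_vec N (i*d+j)"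
  have cv0: "v0 \<in> carrier_vec N" unfolding v0_def by (rule unit_vec_carrier)
  define v1 where "v1 = Hk *\<^sub>v v0"
  define v2 where "v2 = C *\<^sub>v v1"
  define v3 where "v3 = K *\<^sub>v v2"
  define v4 where "v4 = C *\<^sub>v v3"
  define v5 where "v5 = Hk *\<^sub>v v4"
  have dv: "dim_vec v1 = d*d" "dim_vec v2 = d*d" "dim_vec v3 = d*d" "dim_vec v4 = d*d" "dim_vec v0 = d*d"
    using cHk cK cC by (auto simp: v1_def v2_def v3_def v4_def v0_def N_def)
  have cv: "v1 \<in> carrier_vec N" "v2 \<in> carrier_vec N" "v3 \<in> carrier_vec N" "v4 \<in> carrier_vec N"
    using dv by (auto intro!: carrier_vecI simp: N_def)
  have c1': "Hk * C \<in> carrier_mat N N" using cHk cC by auto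
  have c2': "Hk * C * K \<in> carrier_mat N N" using c1' cK by auto
  have c3': "Hk * C * K * C \<in> carrier_mat N N" using c2' cC by auto
  have circ: "twinU_circuit n U *\<^sub>v v0 = v5"
  proof -
    have "twinU_circuit n U = Hk * C * K * C * Hk" by (simp add: twinU_circuit_def Hk_def C_def K_def d_def)
    hence "twinU_circuit n U *\<^sub>v v0 = (Hk * C * K * C) *\<^sub>v v1"
      using assoc_mult_mat_vec[OF c3' cHk cv0] by (simp add: v1_def)
    also have "... = (Hk * C * K) *\<^sub>v v2" using assoc_mult_mat_vec[OF c2' cC cv(1)] by (simp add: v2_def)
    also have "... = (Hk * C) *\<^sub>v v3" using assoc_mult_mat_vec[OF c1' cK cv(2)] by (simp add: v3_def)
    also have "... = v5" using assoc_mult_mat_vec[OF cHk cC cv(3)] by (simp add: v4_def v5_def)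
    finally show ?thesis .
  qed
  have e1: "v1 $ (a*d+b) = hadamard n $$ (a,i) * (if b = j then 1 else 0)" if "a < d" "b < d" for a b
  proof -
    have "v1 $ (a*d+b) = (\<Sum>a'<d. \<Sum>b'<d. hadamard n $$ (a,a') * 1\<^sub>m d $$ (b,b') * v0 $ (a'*d+b'))"
      unfolding v1_def Hk_def using kron_vec[OF cH _ dv(5) that] by simp
    also have "... = (\<Sum>a'<d. \<Sum>b'<d. if a' = i then (if b' = j then hadamard n $$ (a,i) * (if b = j then 1 else 0) else 0) else 0)"
      using that ij idx_lt by (intro sum.cong refl) (auto simp: v0_def N_def idx_inj)
    also have "... = hadamard n $$ (a,i) * (if b = j then 1 else 0)"
      using ij by (simp add: sum_if_out)
    finally show ?thesis .
  qed
  have e2: "v2 $ (a*d+b) = hadamard n $$ (a,i) * (if xor b a = j then 1 else 0)" if "a < d" "b < d" for a b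
    using cnot_vec[of v1 n a b] dv(1) that e1[of a "xor b a"] xor_lt[of b n a] by (simp add: v2_def C_def d_def)
  have e3: "v3 $ (a*d+b) = (\<Sum>a'<d. U $$ (a,a') * U $$ (b, xor j a') * hadamard n $$ (a',i))" if "a < d" "b < d" for a b
  proof -
    have "v3 $ (a*d+b) = (\<Sum>a'<d. \<Sum>b'<d. U $$ (a,a') * U $$ (b,b') * v2 $ (a'*d+b'))"
      unfolding v3_def K_def using kron_vec[OF cU cU dv(2) that] by simp
    also have "... = (\<Sum>a'<d. \<Sum>b'<d. if b' = xor j a' then U $$ (a,a') * U $$ (b, xor j a') * hadamard n $$ (a',i) else 0)"
      using that ij by (intro sum.cong refl) (auto simp: e2 xor_swap2)
    also have "... = (\<Sum>a'<d. U $$ (a,a') * U $$ (b, xor j a') * hadamard n $$ (a',i))"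
      using ij xor_lt[of j n] by (intro sum.cong refl) (simp add: d_def)
    finally show ?thesis .
  qed
  have e4: "v4 $ (a*d+b) = (\<Sum>a'<d. U $$ (a,a') * U $$ (xor b a, xor j a') * hadamard n $$ (a',i))" if "a < d" "b < d" for a b
    using cnot_vec[of v3 n a b] dv(3) that e3[of a "xor b a"] xor_lt[of b n a] by (simp add: v4_def C_def d_def)
  have e5: "v5 $ (k*d+l) = (\<Sum>y<d. hadamard n $$ (k,y) * v4 $ (y*d+l))"
  proof -
    have "v5 $ (k*d+l) = (\<Sum>a'<d. \<Sum>b'<d. hadamard n $$ (k,a') * 1\<^sub>m d $$ (l,b') * v4 $ (a'*d+b'))"
      unfolding v5_def Hk_def using kron_vec[OF cH _ dv(4) ij(3,4)] by simp
    also have "... = (\<Sum>a'<d. \<Sum>b'<d. if b' = l then hadamard n $$ (k,a') * v4 $ (a'*d+l) else 0)"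
      using ij by (intro sum.cong refl) auto
    also have "... = (\<Sum>y<d. hadamard n $$ (k,y) * v4 $ (y*d+l))"
      using ij by simp
    finally show ?thesis .
  qed
  define S where "S = (\<Sum>y<d. \<Sum>x<d. sg n k y * sg n i x * U $$ (y,x) * U $$ (xor y l, xor x j))"
  define z where "z = (complex_of_real (sqrt 2))^n"
  have amp: "v5 $ (k*d+l) = S / z^2"
  proof -
    have "v5 $ (k*d+l) = (\<Sum>y<d. \<Sum>x<d. hadamard n $$ (k,y) * (U $$ (y,x) * U $$ (xor l y, xor j x) * hadamard n $$ (x,i)))"
      unfolding e5 using ij by (intro sum.cong refl) (simp add: e4 sum_distrib_left)
    also have "... = (\<Sum>y<d. \<Sum>x<d. (sg n k y * sg n i x * U $$ (y,x) * U $$ (xor y l, xor x j)) / z^2)"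
      using ij by (intro sum.cong refl) (simp add: had_entry d_def z_def sg_sym[of n _ i] xor.commute power2_eq_square)
    also have "... = S / z^2" by (simp add: S_def sum_divide_distrib)
    finally show ?thesis .
  qed
  define P where "P = pauli n i j"
  define Q where "Q = pauli n k l"
  have cP: "P \<in> carrier_mat d d" unfolding P_def pauli_def d_def by (rule mat_carrier)
  have cQ: "Q \<in> carrier_mat d d" unfolding Q_def pauli_def d_def by (rule mat_carrier)
  define phij where "phij (x::nat) = (\<Prod>r<n. ph1 (bit i r) (bit j r) (bit x r))" for x
  define phkl where "phkl (x::nat) = (\<Prod>r<n. ph1 (bit k r) (bit l r) (bit x r))" for x
  have pP: "P $$ (x,s) = (if s = xor x j then phij x else 0)" if "x < d" "s < d" for x s
    using pauli_entry[of x n s j i] that ij by (simp add: P_def phij_def d_def)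
  have pQ: "Q $$ (t,y) = (if t = xor y l then phkl t else 0)" if "t < d" "y < d" for t y
    using pauli_entry[of t n y l k] that ij by (simp add: Q_def phkl_def d_def xor_swap)
  define UP where "UP = U * P"
  define UPU where "UPU = UP * transpose_mat U"
  have cUP: "UP \<in> carrier_mat d d" using cU cP by (simp add: UP_def)
  have cUPU: "UPU \<in> carrier_mat d d" using cUP cU by (simp add: UPU_def)
  have t1: "UP $$ (y,s) = (\<Sum>x<d. U $$ (y,x) * P $$ (x,s))" if "y < d" "s < d" for y s
    using that cU cP by (simp add: UP_def scalar_prod_def lessThan_atLeast0)
  have t2: "(UPU) $$ (y,t) = (\<Sum>x<d. U $$ (y,x) * phij x * U $$ (t, xor x j))" if "y < d" "t < d" for y t
  proof -
    have "(UPU) $$ (y,t) = (\<Sum>s<d. UP $$ (y,s) * U $$ (t,s))"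
      using that cUP cU unfolding UPU_def by (simp add: scalar_prod_def lessThan_atLeast0)
    also have "... = (\<Sum>s<d. \<Sum>x<d. U $$ (y,x) * P $$ (x,s) * U $$ (t,s))"
      using that by (simp add: t1 sum_distrib_right)
    also have "... = (\<Sum>x<d. \<Sum>s<d. U $$ (y,x) * P $$ (x,s) * U $$ (t,s))"
      by (rule sum.swap)
    also have "... = (\<Sum>x<d. \<Sum>s<d. if s = xor x j then U $$ (y,x) * phij x * U $$ (t, xor x j) else 0)"
      by (intro sum.cong refl) (simp add: pP)
    also have "... = (\<Sum>x<d. U $$ (y,x) * phij x * U $$ (t, xor x j))"
      using ij xor_lt[of _ n j] by (intro sum.cong refl) (simp add: d_def)
    finally show ?thesis .
  qed
  have t3: "(UPU * Q) $$ (y,y) = (\<Sum>x<d. U $$ (y,x) * phij x * U $$ (xor y l, xor x j)) * phkl (xor y l)" if "y < d" for y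
  proof -
    have "(UPU * Q) $$ (y,y) = (\<Sum>t<d. (UPU) $$ (y,t) * Q $$ (t,y))"
      using that cUPU cQ by (simp add: scalar_prod_def lessThan_atLeast0)
    also have "... = (\<Sum>t<d. if t = xor y l then (UPU) $$ (y,t) * phkl t else 0)"
      using that by (intro sum.cong refl) (simp add: pQ)
    also have "... = (UPU) $$ (y, xor y l) * phkl (xor y l)"
      using ij that xor_lt[of y n l] by (simp add: d_def)
    also have "... = (\<Sum>x<d. U $$ (y,x) * phij x * U $$ (xor y l, xor x j)) * phkl (xor y l)"
      using ij that xor_lt[of y n l] by (simp add: t2 d_def)
    finally show ?thesis .
  qed
  define C1 where "C1 = (\<Prod>r<n. c1 (bit i r) (bit j r))"
  define C2 where "C2 = (\<Prod>r<n. c1 (bit k r) (bit l r) * (if bit k r \<and> bit l r then -1 else 1))"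
  have tr: "mat_trace (UPU * Q) = C1 * C2 * S"
  proof -
    have "mat_trace (UPU * Q) = (\<Sum>y<d. (UPU * Q) $$ (y,y))"
      using cUPU by (simp add: mat_trace_def)
    also have "... = (\<Sum>y<d. (\<Sum>x<d. U $$ (y,x) * phij x * U $$ (xor y l, xor x j)) * phkl (xor y l))"
      by (intro sum.cong refl) (simp add: t3)
    also have "... = (\<Sum>y<d. \<Sum>x<d. C1 * C2 * (sg n k y * sg n i x * U $$ (y,x) * U $$ (xor y l, xor x j)))"
      unfolding phij_def phkl_def unfolding ph_prod2 unfolding ph_prod1 C1_def[symmetric] C2_def[symmetric]
      by (intro sum.cong refl) (simp add: sum_distrib_left sum_distrib_right mult_ac)
    also have "... = C1 * C2 * S" by (simp add: S_def sum_distrib_left)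
    finally show ?thesis .
  qed
  have nC: "cmod (C1 * C2) = 1" unfolding C1_def C2_def norm_mult norm_c norm_c2 by simp
  have nz: "cmod z ^ 2 = 2^n" unfolding z_def by (rule sqrt2_pow)
  have "twinU_prob n U i j k l = (cmod (S / z^2))^2"
    unfolding twinU_prob_def using circ amp by (simp add: v0_def N_def d_def)
  also have "... = (cmod S)^2 / (real (2^n))^2"
    using nz by (simp add: norm_divide norm_power power_divide)
  also have "... = 1 / (real (2^n))\<^sup>2 * (cmod (mat_trace (UPU * Q)))\<^sup>2"
    using nC by (simp add: tr norm_mult)
  finally show ?thesis by (simp add: P_def Q_def UPU_def UP_def)
qed
end
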